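(* Let $X$ be a real normed linear space. Then $$\sup_{f\in S_{X^*}}\operatorname{diam} M_f^+=\mathcal{R}(X),$$ where $M_f^+=\{x\in S_X: f(x)=\|f\|\}$ and $\mathcal{R}(X)=\sup\{\|x-y\|:\ \overline{xy}\subset S_X\}$.
   Context: $S_X$, $S_{X^*}$ are the unit spheres of $X$ and its dual. $\overline{xy}=\{(1-t)x+ty:t\in[0,1]\}$ is the closed segment joining $x$ and $y$. $\operatorname{diam}A=\sup_{a,b\in A}\|a-b\|$. *)

theory Defs
  imports "HOL-Analysis.Analysis"
begin

definition Mplus :: "('a::real_normed_vector \<Rightarrow>\<^sub>L real) \<Rightarrow> 'a set" where
  "Mplus f = {x \<in> sphere 0 1. blinfun_apply f x = norm f}"

definition RX :: "'a::real_normed_vector itself \<Rightarrow> real" where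
  "RX _ = Sup {norm (x - y) | x y :: 'a. closed_segment x y \<subseteq> sphere 0 1}"

end

theory Submission
  imports Defs
begin

definition sublin :: "('a::real_vector \<Rightarrow> real) \<Rightarrow> bool" where
  "sublin q \<longleftrightarrow> (\<forall>x y. q (x + y) \<le> q x + q y) \<and> (\<forall>c x. c > 0 \<longrightarrow> q (c *\<^sub>R x) = c * q x)"

lemma sublin_add: "sublin q \<Longrightarrow> q (x + y) \<le> q x + q y"
  by (simp add: sublin_def)

lemma sublin_scale: "sublin q \<Longrightarrow> c > 0 \<Longrightarrow> q (c *\<^sub>R x) = c * q x"
  by (simp add: sublin_def)

lemma sublin_0: assumes "sublin q" shows "q 0 = 0"
proof -
  have "q ((2::real) *\<^sub>R 0) = 2 * q 0" by (rule sublin_scale[OF assms]) simp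
  then have "q 0 = 2 * q 0" by simp
  then show ?thesis by simp
qed

lemma sublin_scale0: "sublin q \<Longrightarrow> c \<ge> 0 \<Longrightarrow> q (c *\<^sub>R x) = c * q x"
  by (cases "c = 0") (auto simp: sublin_0 sublin_scale)

lemma sublin_neg: assumes "sublin q" shows "- q (- x) \<le> q x"
proof -
  have "q (x + - x) \<le> q x + q (- x)" by (rule sublin_add[OF assms])
  then show ?thesis using sublin_0[OF assms] by simp
qed

definition dirinf :: "('a::real_vector \<Rightarrow> real) \<Rightarrow> 'a \<Rightarrow> 'a \<Rightarrow> real" where
  "dirinf q z x = Inf ((\<lambda>t. q (x + t *\<^sub>R z) - t * q z) ` {0..})"

lemma dirinf_lb:
  assumes "sublin q" "t \<ge> 0"
  shows "- q (- x) \<le> q (x + t *\<^sub>R z) - t * q z"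
proof -
  have "q ((x + t *\<^sub>R z) + - x) \<le> q (x + t *\<^sub>R z) + q (- x)" by (rule sublin_add[OF assms(1)])
  then show ?thesis using sublin_scale0[OF assms] by simp
qed

lemma dirinf_bdd: "sublin q \<Longrightarrow> bdd_below ((\<lambda>t. q (x + t *\<^sub>R z) - t * q z) ` {0..})"
  unfolding bdd_below_def using dirinf_lb by blast

lemma dirinf_le:
  assumes "sublin q" "t \<ge> 0"
  shows "dirinf q z x \<le> q (x + t *\<^sub>R z) - t * q z"
  unfolding dirinf_def using assms by (intro cInf_lower dirinf_bdd) auto

lemma dirinf_ge:
  assumes "\<And>t. t \<ge> 0 \<Longrightarrow> b \<le> q (x + t *\<^sub>R z) - t * q z"
  shows "b \<le> dirinf q z x"
  unfolding dirinf_def using assms by (intro cInf_greatest) auto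

lemma dirinf_below: "sublin q \<Longrightarrow> dirinf q z x \<le> q x"
  using dirinf_le[of q 0 z x] by simp

lemma dirinf_negz: "sublin q \<Longrightarrow> dirinf q z (- z) \<le> - q z"
  using dirinf_le[of q 1 z "- z"] sublin_0[of q] by simp

lemma dirinf_lower: "sublin q \<Longrightarrow> - q (- x) \<le> dirinf q z x"
  by (intro dirinf_ge dirinf_lb)

lemma dirinf_sublin:
  assumes q: "sublin q"
  shows "sublin (dirinf q z)"
  unfolding sublin_def
proof safe
  fix x y
  have "dirinf q z (x + y) - (q (y + t *\<^sub>R z) - t * q z) \<le> dirinf q z x" if t: "t \<ge> 0" for t
  proof -
    have "dirinf q z (x + y) - (q (y + t *\<^sub>R z) - t * q z) \<le> q (x + s *\<^sub>R z) - s * q z" if s: "s \<ge> 0" for s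
    proof -
      have "dirinf q z (x + y) \<le> q ((x + y) + (s + t) *\<^sub>R z) - (s + t) * q z"
        using s t q by (intro dirinf_le) auto
      moreover have "q ((x + y) + (s + t) *\<^sub>R z) \<le> q (x + s *\<^sub>R z) + q (y + t *\<^sub>R z)"
        using sublin_add[OF q, of "x + s *\<^sub>R z" "y + t *\<^sub>R z"]
        by (simp add: algebra_simps)
      ultimately show ?thesis by (simp add: algebra_simps)
    qed
    then show ?thesis by (intro dirinf_ge)
  qed
  then have "dirinf q z (x + y) - dirinf q z x \<le> q (y + t *\<^sub>R z) - t * q z" if "t \<ge> 0" for t
    using that by force
  then have "dirinf q z (x + y) - dirinf q z x \<le> dirinf q z y" by (intro dirinf_ge)
  then show "dirinf q z (x + y) \<le> dirinf q z x + dirinf q z y" by simp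
next
  fix c :: real and x assume c: "c > 0"
  have A: "dirinf q z (c *\<^sub>R x) / c \<le> dirinf q z x"
  proof (intro dirinf_ge)
    fix t :: real assume t: "t \<ge> 0"
    have "dirinf q z (c *\<^sub>R x) \<le> q (c *\<^sub>R x + (c * t) *\<^sub>R z) - (c * t) * q z"
      using c t q by (intro dirinf_le) auto
    also have "q (c *\<^sub>R x + (c * t) *\<^sub>R z) = c * q (x + t *\<^sub>R z)"
      using sublin_scale[OF q c, of "x + t *\<^sub>R z"] by (simp add: algebra_simps)
    finally show "dirinf q z (c *\<^sub>R x) / c \<le> q (x + t *\<^sub>R z) - t * q z"
      using c by (simp add: divide_simps algebra_simps)
  qed
  have B: "c * dirinf q z x \<le> dirinf q z (c *\<^sub>R x)"
  proof (intro dirinf_ge)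
    fix t :: real assume t: "t \<ge> 0"
    have "dirinf q z x \<le> q (x + (t / c) *\<^sub>R z) - (t / c) * q z"
      using c t q by (intro dirinf_le) auto
    also have "c * q (x + (t / c) *\<^sub>R z) = q (c *\<^sub>R x + t *\<^sub>R z)"
      using sublin_scale[OF q c, of "x + (t / c) *\<^sub>R z"] c by (simp add: algebra_simps)
    ultimately have "c * dirinf q z x \<le> c * (q (x + (t / c) *\<^sub>R z) - (t / c) * q z)"
      using c by simp
    also have "\<dots> = q (c *\<^sub>R x + t *\<^sub>R z) - t * q z"
      using \<open>c * q (x + (t / c) *\<^sub>R z) = _\<close> c by (simp add: algebra_simps)
    finally show "c * dirinf q z x \<le> q (c *\<^sub>R x + t *\<^sub>R z) - t * q z" .
  qed
  from A c have "dirinf q z (c *\<^sub>R x) \<le> c * dirinf q z x" by (simp add: divide_simps mult.commute)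
  with B show "dirinf q z (c *\<^sub>R x) = c * dirinf q z x" by simp
qed

lemma sublin_norm: "sublin (norm :: 'a::real_normed_vector \<Rightarrow> real)"
  unfolding sublin_def by (auto simp: norm_triangle_ineq)


lemma minimal_sublin_exists:
  fixes q0 :: "'a::real_vector \<Rightarrow> real"
  assumes q0: "sublin q0"
  shows "\<exists>q. sublin q \<and> q \<le> q0 \<and> (\<forall>p. sublin p \<and> p \<le> q \<longrightarrow> p = q)"
proof -
  define S where "S = {q. sublin q \<and> q \<le> q0}"
  define P where "P = (\<lambda>a b::'a\<Rightarrow>real. b \<le> a)"
  have po: "partial_order_on S (relation_of P S)"
    unfolding partial_order_on_def preorder_on_def refl_on_def trans_on_def antisym_on_def
      relation_of_def P_def by auto
  have ch: "\<exists>u \<in> S. \<forall>a \<in> C. P a u" if C: "C \<in> Chains (relation_of P S)" for C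
  proof (cases "C = {}")
    case True then show ?thesis using q0 by (auto simp: S_def)
  next
    case False
    have CS: "C \<subseteq> S" using C False unfolding Chains_def relation_of_def by blast
    have tot: "a \<le> b \<or> b \<le> a" if "a \<in> C" "b \<in> C" for a b
      using C that unfolding Chains_def relation_of_def P_def by blast
    define r where "r x = Inf ((\<lambda>q. q x) ` C)" for x
    have bdd: "bdd_below ((\<lambda>q. q x) ` C)" for x
    proof -
      have "- q0 (- x) \<le> q x" if "q \<in> C" for q
      proof -
        have "q (- x) \<le> q0 (- x)" using CS that by (auto simp: S_def le_fun_def)
        then show ?thesis using sublin_neg[of q x] CS that by (auto simp: S_def)
      qed
      then show ?thesis unfolding bdd_below_def by blast
    qed
    have rle: "r x \<le> q x" if "q \<in> C" for q x
      unfolding r_def using that bdd by (intro cInf_lower) auto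
    have rge: "b \<le> r x" if "\<And>q. q \<in> C \<Longrightarrow> b \<le> q x" for b x
      unfolding r_def using that False by (intro cInf_greatest) auto
    have sub: "sublin q" if "q \<in> C" for q using CS that by (auto simp: S_def)
    have "sublin r"
      unfolding sublin_def
    proof safe
      fix x y
      have "r (x + y) - q2 y \<le> r x" if q2: "q2 \<in> C" for q2
      proof (intro rge)
        fix q1 assume q1: "q1 \<in> C"
        show "r (x + y) - q2 y \<le> q1 x"
        proof (cases "q1 \<le> q2")
          case True
          have "r (x + y) \<le> q1 (x + y)" using rle q1 by blast
          also have "\<dots> \<le> q1 x + q1 y" using sublin_add sub q1 by blast
          also have "q1 y \<le> q2 y" using True by (simp add: le_fun_def)
          finally show ?thesis by simp
        next
          case False
          then have "q2 \<le> q1" using tot q1 q2 by blast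
          have "r (x + y) \<le> q2 (x + y)" using rle q2 by blast
          also have "\<dots> \<le> q2 x + q2 y" using sublin_add sub q2 by blast
          also have "q2 x \<le> q1 x" using \<open>q2 \<le> q1\<close> by (simp add: le_fun_def)
          finally show ?thesis by simp
        qed
      qed
      then have "r (x + y) - r x \<le> q2 y" if "q2 \<in> C" for q2 using that by force
      then have "r (x + y) - r x \<le> r y" by (intro rge)
      then show "r (x + y) \<le> r x + r y" by simp
    next
      fix c :: real and x assume c: "c > 0"
      have "r (c *\<^sub>R x) / c \<le> r x"
      proof (intro rge)
        fix q assume "q \<in> C"
        then have "r (c *\<^sub>R x) \<le> c * q x" using rle sublin_scale[OF sub c] by metis
        then show "r (c *\<^sub>R x) / c \<le> q x" using c by (simp add: divide_simps mult.commute)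
      qed
      moreover have "c * r x \<le> r (c *\<^sub>R x)"
      proof (intro rge)
        fix q assume "q \<in> C"
        then have "c * r x \<le> c * q x" using rle c by simp
        then show "c * r x \<le> q (c *\<^sub>R x)" using sublin_scale[OF sub c] \<open>q \<in> C\<close> by metis
      qed
      ultimately show "r (c *\<^sub>R x) = c * r x" using c by (simp add: divide_simps mult.commute)
    qed
    moreover obtain q1 where "q1 \<in> C" using False by blast
    then have "r \<le> q0" using rle CS by (force simp: S_def le_fun_def intro: order_trans)
    ultimately have "r \<in> S" by (simp add: S_def)
    moreover have "\<forall>a \<in> C. P a r" using rle by (auto simp: P_def le_fun_def)
    ultimately show ?thesis by blast
  qed
  obtain m where m: "m \<in> S" and mx: "\<forall>a \<in> S. P m a \<longrightarrow> a = m"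
    using predicate_Zorn[OF po ch] by blast
  show ?thesis
  proof (intro exI conjI allI impI)
    show "sublin m" "m \<le> q0" using m by (auto simp: S_def)
    fix p assume "sublin p \<and> p \<le> m"
    then show "p = m" using mx m by (auto simp: S_def P_def intro: order_trans)
  qed
qed

lemma minimal_sublin_linear:
  assumes q: "sublin q" and mn: "\<forall>p. sublin p \<and> p \<le> q \<longrightarrow> p = q"
  shows "q (- z) = - q z" "q (x + y) = q x + q y" "q (c *\<^sub>R x) = c * q x"
proof -
  have neg: "q (- z) = - q z" for z
  proof -
    have "dirinf q z = q" using mn dirinf_sublin[OF q] dirinf_below[OF q] by (simp add: le_fun_def)
    then have "q (- z) \<le> - q z" using dirinf_negz[OF q, of z] by simp
    moreover have "- q (- z) \<le> q z" using sublin_neg[OF q] .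
    ultimately show ?thesis by simp
  qed
  show "q (- z) = - q z" by (rule neg)
  show "q (x + y) = q x + q y"
  proof -
    have "q (- x + - y) \<le> q (- x) + q (- y)" by (rule sublin_add[OF q])
    then have "q (- (x + y)) \<le> q (- x) + q (- y)" by (simp add: algebra_simps)
    moreover have "q (- (x + y)) = - q (x + y)" "q (- x) = - q x" "q (- y) = - q y" by (rule neg)+
    ultimately have "q x + q y \<le> q (x + y)" by linarith
    with sublin_add[OF q, of x y] show ?thesis by simp
  qed
  show "q (c *\<^sub>R x) = c * q x"
  proof (cases "c \<ge> 0")
    case True then show ?thesis by (rule sublin_scale0[OF q])
  next
    case False
    have "q (c *\<^sub>R x) = q ((- c) *\<^sub>R (- x))" by simp
    also have "\<dots> = (- c) * q (- x)" using False by (intro sublin_scale0[OF q]) auto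
    finally show ?thesis by (simp add: neg)
  qed
qed

lemma hahn_banach_norming:
  fixes m :: "'a::real_normed_vector"
  assumes m: "norm m = 1"
  shows "\<exists>f :: 'a \<Rightarrow>\<^sub>L real. norm f = 1 \<and> blinfun_apply f m = 1"
proof -
  define q0 where "q0 = dirinf norm m"
  have q0s: "sublin q0" unfolding q0_def by (intro dirinf_sublin sublin_norm)
  obtain q where q: "sublin q" "q \<le> q0" and mn: "\<forall>p. sublin p \<and> p \<le> q \<longrightarrow> p = q"
    using minimal_sublin_exists[OF q0s] by blast
  note lin = minimal_sublin_linear[OF q(1) mn]
  have qn: "q x \<le> norm x" for x
    using q(2) dirinf_below[OF sublin_norm, of m x] by (auto simp: q0_def le_fun_def intro: order_trans)
  have abs: "norm (q x) \<le> norm x * 1" for x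
    using qn[of x] qn[of "- x"] lin(1)[of x] by auto
  have bl: "bounded_linear q"
    by (rule bounded_linear_intro[OF lin(2) _ abs]) (simp add: lin(3))
  have "q (- m) \<le> - 1"
    using q(2) dirinf_negz[OF sublin_norm, of m] m by (auto simp: q0_def le_fun_def intro: order_trans)
  then have qm: "q m = 1" using lin(1)[of m] qn[of m] m by simp
  define f where "f = Blinfun q"
  have fa: "blinfun_apply f = q" unfolding f_def using bl by (rule bounded_linear_Blinfun_apply)
  have "norm f \<le> 1" by (rule norm_blinfun_bound) (use abs fa in auto)
  moreover have "1 \<le> norm f" using norm_blinfun[of f m] fa qm m by simp
  ultimately show ?thesis using fa qm by (intro exI[of _ f]) auto
qed


lemma Mplus_segment:
  fixes f :: "'a::real_normed_vector \<Rightarrow>\<^sub>L real"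
  assumes f: "norm f = 1" and x: "x \<in> Mplus f" and y: "y \<in> Mplus f"
  shows "closed_segment x y \<subseteq> sphere 0 1"
proof
  fix z assume "z \<in> closed_segment x y"
  then obtain u where u: "0 \<le> u" "u \<le> 1" and z: "z = (1 - u) *\<^sub>R x + u *\<^sub>R y"
    by (auto simp: closed_segment_def)
  have nx: "norm x = 1" "norm y = 1" and fx: "f x = 1" "f y = 1"
    using x y f by (auto simp: Mplus_def)
  have "f z = (1 - u) * f x + u * f y"
    by (simp add: z blinfun.add_right blinfun.scaleR_right)
  then have fz: "f z = 1" using fx by (simp add: algebra_simps)
  have "norm z \<le> norm ((1 - u) *\<^sub>R x) + norm (u *\<^sub>R y)" unfolding z by (rule norm_triangle_ineq)
  also have "\<dots> = 1" using u nx by simp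
  finally have "norm z \<le> 1" .
  moreover have "1 \<le> norm z" using norm_blinfun[of f z] fz f by simp
  ultimately show "z \<in> sphere 0 1" by simp
qed

theorem theorem2p9:
  shows "(SUP f \<in> {f :: 'a::real_normed_vector \<Rightarrow>\<^sub>L real. norm f = 1}. diameter (Mplus f))
         = RX TYPE('a)"
proof (cases "\<exists>e::'a. norm e = 1")
  case False
  have triv: "x = 0" for x :: 'a
  proof (rule ccontr)
    assume "x \<noteq> 0"
    then have "norm (x /\<^sub>R norm x) = 1" by simp
    with False show False by blast
  qed
  have "{f :: 'a \<Rightarrow>\<^sub>L real. norm f = 1} = {}"
  proof safe
    fix f :: "'a \<Rightarrow>\<^sub>L real" assume "norm f = 1"
    moreover have "norm f \<le> 0"
    proof (rule norm_blinfun_bound)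
      fix x :: 'a
      have "x = 0" by (rule triv)
      then show "norm (blinfun_apply f x) \<le> 0 * norm x" by simp
    qed simp
    ultimately show "f \<in> {}" by simp
  qed
  moreover have "\<not> closed_segment x y \<subseteq> sphere 0 1" for x y :: 'a
  proof
    assume "closed_segment x y \<subseteq> sphere 0 1"
    then have "x \<in> sphere 0 1" using ends_in_segment(1) by blast
    then show False using False by simp
  qed
  then have "{norm (x - y) | x y :: 'a. closed_segment x y \<subseteq> sphere 0 1} = {}"
    by blast
  ultimately show ?thesis unfolding RX_def by simp
next
  case True
  then obtain e :: 'a where e: "norm e = 1" by blast
  define F where "F = {f :: 'a \<Rightarrow>\<^sub>L real. norm f = 1}"
  define R where "R = {norm (x - y) | x y :: 'a. closed_segment x y \<subseteq> sphere 0 1}"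
  have Fne: "F \<noteq> {}" using hahn_banach_norming[OF e] by (auto simp: F_def)
  have R0: "0 \<in> R" unfolding R_def using e by (intro CollectI exI[of _ e]) auto
  have Rbdd: "bdd_above R"
  proof -
    have "r \<le> 2" if rR: "r \<in> R" for r
    proof -
      obtain x y :: 'a where r: "r = norm (x - y)" and seg: "closed_segment x y \<subseteq> sphere 0 1"
        using rR unfolding R_def by blast
      have "x \<in> sphere 0 1" "y \<in> sphere 0 1" using seg ends_in_segment by blast+
      then have "norm x = 1" "norm y = 1" by simp_all
      then show ?thesis using r norm_triangle_ineq4[of x y] by simp
    qed
    then show ?thesis by (auto simp: bdd_above_def)
  qed
  have Msub: "Mplus f \<subseteq> sphere 0 1" for f unfolding Mplus_def by blast
  have Mbdd: "bounded (Mplus f)" for f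
  proof -
    have "Mplus f \<subseteq> cball 0 1" using Msub[of f] sphere_cball by blast
    then show ?thesis using bounded_cball bounded_subset by blast
  qed
  have diam_le: "diameter (Mplus f) \<le> Sup R" if "f \<in> F" for f
  proof (rule diameter_le)
    show "Mplus f \<noteq> {} \<or> 0 \<le> Sup R" using cSup_upper[OF R0 Rbdd] by simp
    fix x y assume "x \<in> Mplus f" "y \<in> Mplus f"
    then have "closed_segment x y \<subseteq> sphere 0 1" using Mplus_segment[of f x y] that by (simp add: F_def)
    then have "norm (x - y) \<in> R" unfolding R_def by blast
    then show "norm (x - y) \<le> Sup R" using Rbdd by (rule cSup_upper)
  qed
  have Dbdd: "bdd_above ((\<lambda>f. diameter (Mplus f)) ` F)"
    using diam_le by (auto simp: bdd_above_def)
  have "(SUP f \<in> F. diameter (Mplus f)) \<le> Sup R"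
    using Fne diam_le by (intro cSUP_least) auto
  moreover have "Sup R \<le> (SUP f \<in> F. diameter (Mplus f))"
  proof (rule cSup_least)
    show "R \<noteq> {}" using R0 by blast
    fix r assume "r \<in> R"
    then obtain x y :: 'a where r: "r = norm (x - y)" and seg: "closed_segment x y \<subseteq> sphere 0 1"
      using \<open>r \<in> R\<close> unfolding R_def by blast
    have "x \<in> sphere 0 1" "y \<in> sphere 0 1" using seg ends_in_segment by blast+
    then have nx: "norm x = 1" "norm y = 1" by simp_all
    define m where "m = midpoint x y"
    have "m \<in> closed_segment x y" unfolding m_def by simp
    then have "m \<in> sphere 0 1" using seg by blast
    then have nm: "norm m = 1" by simp
    obtain f :: "'a \<Rightarrow>\<^sub>L real" where f: "norm f = 1" "f m = 1"
      using hahn_banach_norming[OF nm] by blast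
    have fx: "f x \<le> 1" "f y \<le> 1"
      using norm_blinfun[of f x] norm_blinfun[of f y] f nx by (simp_all add: abs_le_iff)
    have "f m = (f x + f y) / 2"
      by (simp add: m_def midpoint_def blinfun.add_right blinfun.scaleR_right)
    then have "f x = 1" "f y = 1" using fx f by auto
    then have xy: "x \<in> Mplus f" "y \<in> Mplus f" using nx f by (auto simp: Mplus_def)
    have "r \<le> diameter (Mplus f)"
      using diameter_bounded_bound[OF Mbdd xy] r by (simp add: dist_norm)
    also have "\<dots> \<le> (SUP f \<in> F. diameter (Mplus f))"
      using f Dbdd by (intro cSUP_upper) (auto simp: F_def)
    finally show "r \<le> (SUP f \<in> F. diameter (Mplus f))" .
  qed
  ultimately show ?thesis by (simp add: F_def R_def RX_def)
qed

end
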